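(* Fix $\alpha\in(0,1)$ and integers $k\ge1$, $m\ge1$. Let $(P_i)_{i\ge0}$ be the $\alpha$-random walk, $X_i(m)=1$ if $P_i$ is visible at level $m$ (else $0$), $Y_i(m)=X_i(m)\cdots X_{i+k-1}(m)$ and $\overline S_{n,k}(m)=\frac1n\sum_{i=1}^nY_i(m)$. Then $$\mathbf V(\overline S_{n,k}(m))\ll\frac{D_m^4}{\sqrt n},$$ with implied constant depending only on $\alpha$ and $k$.
   Context: The $\alpha$-random walk: $P_0=(0,0)$ and $P_{i+1}=P_i+(1,0)$ with probability $\alpha$, $P_{i+1}=P_i+(0,1)$ with probability $1-\alpha$, independently. A lattice point $(a,b)$ is visible at level $m$ if no prime $p<m$ divides both $a$ and $b$. $D_m=\prod_{p<m}p$ over primes (empty product $=1$). $\mathbf V$ denotes variance. *)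

theory Defs
  imports "HOL-Probability.Probability" "HOL-Computational_Algebra.Primes"
begin

text \<open>Probability space of the steps: an i.i.d. sequence of Bernoulli(alpha) booleans;
  step j is True (move by (1,0)) with probability alpha, False (move by (0,1)) otherwise.\<close>
definition walk_space :: "real \<Rightarrow> bool stream measure" where
  "walk_space \<alpha> = stream_space (measure_pmf (bernoulli_pmf \<alpha>))"

definition walk_pos :: "bool stream \<Rightarrow> nat \<Rightarrow> nat \<times> nat" where
  "walk_pos \<omega> i = (card {j. j < i \<and> \<omega> !! j}, card {j. j < i \<and> \<not> \<omega> !! j})"

definition visible :: "nat \<Rightarrow> nat \<times> nat \<Rightarrow> bool" where
  "visible m ab \<longleftrightarrow> (\<forall>p::nat. prime p \<and> p < m \<longrightarrow> \<not> (p dvd fst ab \<and> p dvd snd ab))"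

definition D :: "nat \<Rightarrow> nat" where
  "D m = (\<Prod>p\<in>{p::nat. prime p \<and> p < m}. p)"

definition Xv :: "nat \<Rightarrow> nat \<Rightarrow> bool stream \<Rightarrow> real" where
  "Xv m i \<omega> = (if visible m (walk_pos \<omega> i) then 1 else 0)"

definition Yv :: "nat \<Rightarrow> nat \<Rightarrow> nat \<Rightarrow> bool stream \<Rightarrow> real" where
  "Yv k m i \<omega> = (\<Prod>j<k. Xv m (i + j) \<omega>)"

definition Sbar :: "nat \<Rightarrow> nat \<Rightarrow> nat \<Rightarrow> bool stream \<Rightarrow> real" where
  "Sbar n k m \<omega> = (1 / real n) * (\<Sum>i=1..n. Yv k m i \<omega>)"

definition var :: "'a measure \<Rightarrow> ('a \<Rightarrow> real) \<Rightarrow> real" where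
  "var M X = (\<integral>x. (X x - (\<integral>y. X y \<partial>M))\<^sup>2 \<partial>M)"

end

theory Submission
  imports Defs
begin

definition wt :: "real \<Rightarrow> bool list \<Rightarrow> real" where
  "wt a xs = prod_list (map (\<lambda>x. if x then a else 1 - a) xs)"

definition EL :: "real \<Rightarrow> nat \<Rightarrow> (bool list \<Rightarrow> real) \<Rightarrow> real" where
  "EL a N f = (\<Sum>xs\<in>{xs. length xs = N}. wt a xs * f xs)"

lemma lists_Suc_split:
  "{xs::bool list. length xs = Suc N} = Cons False ` {xs. length xs = N} \<union> Cons True ` {xs. length xs = N}"
proof (rule set_eqI, rule iffI)
  fix xs :: "bool list" assume "xs \<in> {xs. length xs = Suc N}"
  then obtain x ys where "xs = x # ys" "length ys = N" by (auto simp: length_Suc_conv)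
  then show "xs \<in> Cons False ` {xs. length xs = N} \<union> Cons True ` {xs. length xs = N}"
    by (cases x) auto
qed auto

lemma EL_0[simp]: "EL a 0 f = f []"
  by (simp add: EL_def wt_def)

lemma EL_Suc: "EL a (Suc N) f = (1 - a) * EL a N (\<lambda>ys. f (False # ys)) + a * EL a N (\<lambda>ys. f (True # ys))"
proof -
  have fin: "finite {xs::bool list. length xs = N}"
    by (induction N) (simp_all add: lists_Suc_split)
  have "EL a (Suc N) f = (\<Sum>xs\<in>Cons False ` {xs. length xs = N}. wt a xs * f xs)
      + (\<Sum>xs\<in>Cons True ` {xs. length xs = N}. wt a xs * f xs)"
    unfolding EL_def lists_Suc_split
    by (rule sum.union_disjoint) (use fin in auto)
  also have "\<dots> = (\<Sum>ys\<in>{xs. length xs = N}. wt a (False # ys) * f (False # ys))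
      + (\<Sum>ys\<in>{xs. length xs = N}. wt a (True # ys) * f (True # ys))"
    by (simp add: sum.reindex)
  also have "\<dots> = (1 - a) * EL a N (\<lambda>ys. f (False # ys)) + a * EL a N (\<lambda>ys. f (True # ys))"
    by (simp add: EL_def wt_def sum_distrib_left mult.assoc)
  finally show ?thesis .
qed

lemma EL_cong: "(\<And>xs. length xs = N \<Longrightarrow> f xs = g xs) \<Longrightarrow> EL a N f = EL a N g"
  unfolding EL_def by (rule sum.cong) auto

lemma EL_const[simp]: "EL a N (\<lambda>_. c) = c"
  by (induction N) (simp_all add: EL_Suc algebra_simps)

lemma EL_add: "EL a N (\<lambda>xs. f xs + g xs) = EL a N f + EL a N g"
  unfolding EL_def by (simp add: algebra_simps sum.distrib)

lemma EL_diff: "EL a N (\<lambda>xs. f xs - g xs) = EL a N f - EL a N g"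
  unfolding EL_def by (simp add: algebra_simps sum_subtractf)

lemma EL_cmult: "EL a N (\<lambda>xs. c * f xs) = c * EL a N f"
  unfolding EL_def by (simp add: sum_distrib_left algebra_simps)

lemma EL_sum: "EL a N (\<lambda>xs. \<Sum>i\<in>I. f i xs) = (\<Sum>i\<in>I. EL a N (f i))"
  unfolding EL_def by (simp add: sum_distrib_left sum.swap[of _ I])

lemma wt_nonneg: "0 \<le> a \<Longrightarrow> a \<le> 1 \<Longrightarrow> 0 \<le> wt a xs"
  unfolding wt_def by (induction xs) auto

lemma EL_mono: "0 \<le> a \<Longrightarrow> a \<le> 1 \<Longrightarrow> (\<And>xs. length xs = N \<Longrightarrow> f xs \<le> g xs) \<Longrightarrow> EL a N f \<le> EL a N g"
  unfolding EL_def by (rule sum_mono) (auto intro: mult_left_mono wt_nonneg)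

lemma EL_append: "EL a (M + N) f = EL a M (\<lambda>xs. EL a N (\<lambda>ys. f (xs @ ys)))"
proof (induction M arbitrary: f)
  case 0 then show ?case by simp
next
  case (Suc M)
  show ?case by (simp add: EL_Suc Suc.IH)
qed

lemma EL_prefix:
  assumes "M \<le> N" "\<And>xs ys. length xs = M \<Longrightarrow> f (xs @ ys) = g xs"
  shows "EL a N f = EL a M g"
proof -
  have "EL a N f = EL a (M + (N - M)) f" using assms(1) by simp
  also have "\<dots> = EL a M (\<lambda>xs. EL a (N - M) (\<lambda>ys. f (xs @ ys)))" by (rule EL_append)
  also have "\<dots> = EL a M g" by (rule EL_cong) (simp add: assms(2))
  finally show ?thesis .
qed

lemma EL_bounds:
  assumes "0 \<le> a" "a \<le> 1" "\<And>xs. length xs = N \<Longrightarrow> lo \<le> f xs \<and> f xs \<le> hi"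
  shows "lo \<le> EL a N f \<and> EL a N f \<le> hi"
proof
  have "EL a N (\<lambda>_. lo) \<le> EL a N f" using assms by (intro EL_mono) auto
  then show "lo \<le> EL a N f" by simp
  have "EL a N f \<le> EL a N (\<lambda>_. hi)" using assms by (intro EL_mono) auto
  then show "EL a N f \<le> hi" by simp
qed

section \<open>Link with the stream space\<close>

lemma stake_measurable:
  "stake N \<in> measurable (stream_space (measure_pmf p)) (count_space (UNIV :: bool list set))"
proof -
  have e: "sets (stream_space (measure_pmf p)) = sets (stream_space (count_space UNIV))"
    by (rule sets_stream_space_cong) simp
  show ?thesis unfolding measurable_cong_sets[OF e refl] by (rule measurable_stake)
qed

lemma stake_borel:
  fixes h :: "bool list \<Rightarrow> real"
  shows "(\<lambda>\<omega>. h (stake N \<omega>)) \<in> borel_measurable (stream_space (measure_pmf p))"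
  using stake_measurable[of N p] by measurable

lemma nn_integral_stake:
  assumes a: "0 \<le> a" "a \<le> 1" and nn: "\<And>xs. length xs = N \<Longrightarrow> 0 \<le> f xs"
  shows "(\<integral>\<^sup>+\<omega>. ennreal (f (stake N \<omega>)) \<partial>stream_space (measure_pmf (bernoulli_pmf a))) = ennreal (EL a N f)"
  using nn
proof (induction N arbitrary: f)
  case 0
  interpret prob_space "stream_space (measure_pmf (bernoulli_pmf a))"
    by (rule prob_space.prob_space_stream_space) (rule prob_space_measure_pmf)
  show ?case using 0 by (simp add: emeasure_space_1)
next
  case (Suc N)
  interpret P: prob_space "measure_pmf (bernoulli_pmf a)" by (rule prob_space_measure_pmf)
  have meas: "(\<lambda>\<omega>. ennreal (f (stake (Suc N) \<omega>))) \<in> borel_measurable (stream_space (measure_pmf (bernoulli_pmf a)))"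
  proof -
    have "stake (Suc N) \<in> measurable (stream_space (measure_pmf (bernoulli_pmf a))) (count_space UNIV)"
    proof -
      have e: "sets (stream_space (measure_pmf (bernoulli_pmf a))) = sets (stream_space (count_space UNIV))"
        by (rule sets_stream_space_cong) simp
      show ?thesis unfolding measurable_cong_sets[OF e refl] by (rule measurable_stake)
    qed
    then show ?thesis by measurable
  qed
  have "(\<integral>\<^sup>+\<omega>. ennreal (f (stake (Suc N) \<omega>)) \<partial>stream_space (measure_pmf (bernoulli_pmf a)))
     = (\<integral>\<^sup>+x. (\<integral>\<^sup>+X. ennreal (f (x # stake N X)) \<partial>stream_space (measure_pmf (bernoulli_pmf a))) \<partial>measure_pmf (bernoulli_pmf a))"
    by (subst prob_space.nn_integral_stream_space[OF prob_space_measure_pmf meas]) simp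
  also have "\<dots> = (\<integral>\<^sup>+x. ennreal (EL a N (\<lambda>ys. f (x # ys))) \<partial>measure_pmf (bernoulli_pmf a))"
    by (rule nn_integral_cong) (rule Suc.IH, simp add: Suc.prems)
  also have "\<dots> = ennreal (EL a (Suc N) f)"
  proof -
    have n1: "0 \<le> EL a N (\<lambda>ys. f (True # ys))" "0 \<le> EL a N (\<lambda>ys. f (False # ys))"
      using EL_mono[OF a, of N "\<lambda>_. 0" "\<lambda>ys. f (True # ys)"]
        EL_mono[OF a, of N "\<lambda>_. 0" "\<lambda>ys. f (False # ys)"] Suc.prems by auto
    define T where "T = EL a N (\<lambda>ys. f (True # ys))"
    define F where "F = EL a N (\<lambda>ys. f (False # ys))"
    have "(\<integral>\<^sup>+x. ennreal (EL a N (\<lambda>ys. f (x # ys))) \<partial>measure_pmf (bernoulli_pmf a))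
        = ennreal T * ennreal a + ennreal F * ennreal (1 - a)"
      using a by (simp add: T_def F_def)
    also have "\<dots> = ennreal (T * a) + ennreal (F * (1 - a))"
      using a n1 by (simp add: ennreal_mult T_def F_def)
    also have "\<dots> = ennreal (T * a + F * (1 - a))"
      using a n1 by (intro ennreal_plus[symmetric]) (auto simp: T_def F_def)
    also have "T * a + F * (1 - a) = EL a (Suc N) f"
      by (simp add: EL_Suc T_def F_def algebra_simps)
    finally show ?thesis .
  qed
  finally show ?case .
qed

lemma integral_stake:
  assumes a: "0 \<le> a" "a \<le> 1"
  shows "(\<integral>\<omega>. f (stake N \<omega>) \<partial>stream_space (measure_pmf (bernoulli_pmf a))) = EL a N f"
proof -
  let ?S = "stream_space (measure_pmf (bernoulli_pmf a))"
  interpret prob_space ?S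
    by (rule prob_space.prob_space_stream_space) (rule prob_space_measure_pmf)
  have fin: "finite {xs::bool list. length xs = N}"
    by (induction N) (simp_all add: lists_Suc_split)
  define c where "c = (\<Sum>xs\<in>{xs. length xs = N}. \<bar>f xs\<bar>)"
  have fc: "\<bar>f xs\<bar> \<le> c" if "length xs = N" for xs
    unfolding c_def using fin that by (intro member_le_sum) auto
  define g where "g = (\<lambda>xs. f xs + c)"
  have gnn: "0 \<le> g xs" if "length xs = N" for xs
    using fc[OF that] by (simp add: g_def)
  have intg: "integrable ?S (\<lambda>\<omega>. g (stake N \<omega>))"
  proof (rule integrable_const_bound[where B = "2 * c"])
    show "AE x in ?S. norm (g (stake N x)) \<le> 2 * c"
    proof (rule AE_I2)
      fix x
      have "\<bar>f (stake N x)\<bar> \<le> c" by (rule fc) simp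
      then show "norm (g (stake N x)) \<le> 2 * c" by (simp add: g_def)
    qed
  qed (rule stake_borel)
  have "(\<integral>\<omega>. g (stake N \<omega>) \<partial>?S) = enn2real (\<integral>\<^sup>+\<omega>. ennreal (g (stake N \<omega>)) \<partial>?S)"
    by (rule integral_eq_nn_integral) (auto intro!: stake_borel gnn)
  also have "\<dots> = EL a N g"
    using EL_mono[OF a, of N "\<lambda>_. 0" g] gnn
    by (subst nn_integral_stake[OF a gnn]) auto
  also have "\<dots> = EL a N f + c" using EL_add[of a N f "\<lambda>_. c"] by (simp add: g_def)
  finally have i1: "(\<integral>\<omega>. g (stake N \<omega>) \<partial>?S) = EL a N f + c" .
  have "(\<integral>\<omega>. f (stake N \<omega>) \<partial>?S) = (\<integral>\<omega>. g (stake N \<omega>) - c \<partial>?S)"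
    by (simp add: g_def)
  also have "\<dots> = (\<integral>\<omega>. g (stake N \<omega>) \<partial>?S) - c"
    using intg by (simp add: prob_space)
  finally show ?thesis using i1 by simp
qed

section \<open>The averaging operator and energy estimates\<close>

definition Pop :: "real \<Rightarrow> (nat \<Rightarrow> real) \<Rightarrow> nat \<Rightarrow> real" where
  "Pop a \<phi> x = (1 - a) * \<phi> x + a * \<phi> (Suc x)"

definition cT :: "bool list \<Rightarrow> nat" where
  "cT xs = length (filter (\<lambda>x. x) xs)"

lemma cT_simps[simp]: "cT [] = 0" "cT (True # xs) = Suc (cT xs)" "cT (False # xs) = cT xs"
  "cT (xs @ ys) = cT xs + cT ys"
  by (simp_all add: cT_def)

lemma EL_count: "EL a t (\<lambda>cs. \<phi> (x + cT cs)) = (Pop a ^^ t) \<phi> x"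
proof (induction t arbitrary: x)
  case 0 then show ?case by simp
next
  case (Suc t)
  have "EL a (Suc t) (\<lambda>cs. \<phi> (x + cT cs)) = (1 - a) * EL a t (\<lambda>cs. \<phi> (x + cT cs))
      + a * EL a t (\<lambda>cs. \<phi> (Suc x + cT cs))"
    by (simp add: EL_Suc)
  also have "\<dots> = (1 - a) * (Pop a ^^ t) \<phi> x + a * (Pop a ^^ t) \<phi> (Suc x)"
    using Suc.IH[of x] Suc.IH[of "Suc x"] by simp
  also have "\<dots> = Pop a ((Pop a ^^ t) \<phi>) x" by (simp only: Pop_def)
  finally show ?case by simp
qed

definition per :: "nat \<Rightarrow> (nat \<Rightarrow> real) \<Rightarrow> bool" where
  "per L f \<longleftrightarrow> (\<forall>x. f (x + L) = f x)"

lemma per_Pop: "per L f \<Longrightarrow> per L (Pop a f)"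
  unfolding per_def Pop_def by (metis add_Suc)

lemma per_iter: "per L f \<Longrightarrow> per L ((Pop a ^^ t) f)"
  by (induction t) (simp_all add: per_Pop)

lemma per_mod: assumes "per L f" shows "f x = f (x mod L)"
proof -
  have "f (r + L * q) = f r" for r q
  proof (induction q)
    case (Suc q)
    have "f (r + L * Suc q) = f ((r + L * q) + L)" by (simp add: algebra_simps)
    also have "\<dots> = f (r + L * q)" using assms by (simp add: per_def)
    finally show ?case using Suc by simp
  qed simp
  then show ?thesis by (metis mod_mult_div_eq mult.commute)
qed

lemma shift_sum: fixes F :: "nat \<Rightarrow> real" assumes "F L = F 0"
  shows "(\<Sum>x<L. F (Suc x)) = (\<Sum>x<L. F x)"
proof -
  have "F 0 + (\<Sum>x<L. F (Suc x)) = (\<Sum>x<Suc L. F x)" by (rule sum.lessThan_Suc_shift[symmetric])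
  also have "\<dots> = (\<Sum>x<L. F x) + F L" by simp
  finally show ?thesis using assms by simp
qed

definition En :: "nat \<Rightarrow> (nat \<Rightarrow> real) \<Rightarrow> real" where
  "En L f = (\<Sum>x<L. (f x)\<^sup>2)"

lemma energy:
  assumes "per L f"
  shows "En L (Pop a f) = En L f - a * (1 - a) * (\<Sum>x<L. (f (Suc x) - f x)\<^sup>2)"
proof -
  have pw: "(Pop a f x)\<^sup>2 = (1 - a) * (f x)\<^sup>2 + a * (f (Suc x))\<^sup>2 - a * (1 - a) * (f (Suc x) - f x)\<^sup>2" for x
    by (simp add: Pop_def power2_eq_square algebra_simps)
  have sh: "(\<Sum>x<L. (f (Suc x))\<^sup>2) = (\<Sum>x<L. (f x)\<^sup>2)"
    by (rule shift_sum[where F = "\<lambda>x. (f x)\<^sup>2"]) (use assms in \<open>simp add: per_def, metis add_0\<close>)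
  have "En L (Pop a f) = (1 - a) * (\<Sum>x<L. (f x)\<^sup>2) + a * (\<Sum>x<L. (f (Suc x))\<^sup>2)
      - a * (1 - a) * (\<Sum>x<L. (f (Suc x) - f x)\<^sup>2)"
    by (simp add: En_def pw sum.distrib sum_subtractf sum_distrib_left)
  then show ?thesis using sh by (simp add: En_def algebra_simps)
qed

definition sq :: "real \<Rightarrow> nat \<Rightarrow> (nat \<Rightarrow> real) \<Rightarrow> nat \<Rightarrow> real" where
  "sq a L \<phi> t = (\<Sum>x<L. ((Pop a ^^ t) \<phi> (Suc x) - (Pop a ^^ t) \<phi> x)\<^sup>2)"

definition Tosc :: "real \<Rightarrow> nat \<Rightarrow> (nat \<Rightarrow> real) \<Rightarrow> nat \<Rightarrow> real" where
  "Tosc a L \<phi> t = (\<Sum>x<L. \<bar>(Pop a ^^ t) \<phi> (Suc x) - (Pop a ^^ t) \<phi> x\<bar>)"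

lemma telescope:
  assumes "per L \<phi>"
  shows "(\<Sum>t<n. a * (1 - a) * sq a L \<phi> t) = En L \<phi> - En L ((Pop a ^^ n) \<phi>)"
proof (induction n)
  case (Suc n)
  have "En L ((Pop a ^^ Suc n) \<phi>) = En L ((Pop a ^^ n) \<phi>) - a * (1 - a) * sq a L \<phi> n"
  proof -
    have "per L ((Pop a ^^ n) \<phi>)" by (rule per_iter[OF assms])
    from energy[OF this, of a] show ?thesis by (simp add: sq_def)
  qed
  then show ?case using Suc by simp
qed simp

lemma osc_lt:
  fixes f :: "nat \<Rightarrow> real"
  assumes "x < L" "y < L"
  shows "f y - f x \<le> (\<Sum>z<L. \<bar>f (Suc z) - f z\<bar>)"
proof (cases "x \<le> y")
  case True
  have "f y - f x = (\<Sum>z=x..<y. f (Suc z) - f z)" using True by (simp add: sum_Suc_diff')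
  also have "\<dots> \<le> (\<Sum>z=x..<y. \<bar>f (Suc z) - f z\<bar>)" by (rule sum_mono) simp
  also have "\<dots> \<le> (\<Sum>z<L. \<bar>f (Suc z) - f z\<bar>)" using assms by (intro sum_mono2) auto
  finally show ?thesis .
next
  case False
  have "f x - f y = (\<Sum>z=y..<x. f (Suc z) - f z)" using False by (simp add: sum_Suc_diff')
  then have "f y - f x = (\<Sum>z=y..<x. f z - f (Suc z))" by (simp add: sum_subtractf)
  also have "\<dots> \<le> (\<Sum>z=y..<x. \<bar>f (Suc z) - f z\<bar>)" by (rule sum_mono) simp
  also have "\<dots> \<le> (\<Sum>z<L. \<bar>f (Suc z) - f z\<bar>)" using assms by (intro sum_mono2) auto
  finally show ?thesis .
qed

lemma osc_all:
  assumes "per L f" "0 < L"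
  shows "f y - f x \<le> (\<Sum>z<L. \<bar>f (Suc z) - f z\<bar>)"
  using osc_lt[of "x mod L" L "y mod L" f] assms per_mod[OF assms(1), of x] per_mod[OF assms(1), of y]
  by simp

lemma CS_abs: "(\<Sum>z<L. \<bar>d z\<bar>)\<^sup>2 \<le> real L * (\<Sum>z<L. (d z)\<^sup>2 :: real)"
  using Cauchy_Schwarz_ineq_sum[of "\<lambda>_. 1::real" "\<lambda>z. \<bar>d z\<bar>" "{..<L}"] by simp

lemma sum_Tosc:
  assumes a: "0 < a" "a < 1" and per: "per L \<phi>" and b: "\<And>x. 0 \<le> \<phi> x \<and> \<phi> x \<le> 1"
    and L: "0 < L" and n: "1 \<le> n"
  shows "(\<Sum>t<n. Tosc a L \<phi> t) \<le> real L * sqrt (real n) * (1 / (a * (1 - a)) + 1) / 2"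
proof -
  define c where "c = a * (1 - a)"
  have c: "0 < c" using a by (simp add: c_def)
  have sqnn: "0 \<le> sq a L \<phi> t" for t by (simp add: sq_def sum_nonneg)
  have Enb: "En L \<phi> \<le> real L"
  proof -
    have "En L \<phi> \<le> (\<Sum>x<L. 1)" unfolding En_def
      by (rule sum_mono) (use b in \<open>simp add: power_le_one abs_le_iff\<close>)
    then show ?thesis by simp
  qed
  have Enn: "0 \<le> En L f" for f by (simp add: En_def sum_nonneg)
  have "c * (\<Sum>t<n. sq a L \<phi> t) = En L \<phi> - En L ((Pop a ^^ n) \<phi>)"
    using telescope[OF per, of a n] by (simp add: c_def sum_distrib_left)
  also have "\<dots> \<le> real L" using Enb Enn[of "(Pop a ^^ n) \<phi>"] by simp
  finally have ssum: "(\<Sum>t<n. sq a L \<phi> t) \<le> real L / c" using c by (simp add: field_simps)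
  define l where "l = real L / sqrt (real n)"
  have sn: "0 < sqrt (real n)" using n by simp
  have l: "0 < l" using L sn by (simp add: l_def)
  have Tb: "Tosc a L \<phi> t \<le> (real L * sq a L \<phi> t / l + l) / 2" for t
  proof -
    have "(Tosc a L \<phi> t)\<^sup>2 \<le> real L * sq a L \<phi> t"
      unfolding Tosc_def sq_def by (rule CS_abs)
    moreover have "0 \<le> (Tosc a L \<phi> t - l)\<^sup>2" by simp
    ultimately have "2 * l * Tosc a L \<phi> t \<le> real L * sq a L \<phi> t + l * l"
      by (simp add: power2_eq_square algebra_simps)
    then show ?thesis using l by (simp add: field_simps)
  qed
  have "(\<Sum>t<n. Tosc a L \<phi> t) \<le> (\<Sum>t<n. (real L * sq a L \<phi> t / l + l) / 2)"
    by (rule sum_mono) (rule Tb)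
  also have "\<dots> = (real L / l * (\<Sum>t<n. sq a L \<phi> t) + real n * l) / 2"
    by (simp add: sum_divide_distrib[symmetric] sum.distrib sum_distrib_left)
  also have "\<dots> \<le> (real L / l * (real L / c) + real n * l) / 2"
  proof -
    have "real L / l * (\<Sum>t<n. sq a L \<phi> t) \<le> real L / l * (real L / c)"
      by (rule mult_left_mono[OF ssum]) (use l in simp)
    then show ?thesis by (intro divide_right_mono add_right_mono) auto
  qed
  also have "real L / l * (real L / c) = real L * sqrt (real n) / c"
    using sn L by (simp add: l_def field_simps)
  also have "real n * l = real L * sqrt (real n)"
  proof -
    have "real n = sqrt (real n) * sqrt (real n)" by simp
    then show ?thesis using sn by (simp add: l_def field_simps)
  qed
  finally show ?thesis by (simp add: c_def field_simps)
qed

section \<open>The walk in list form\<close>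

definition cF :: "bool list \<Rightarrow> nat" where
  "cF xs = length (filter (\<lambda>x. \<not> x) xs)"

definition pos :: "bool list \<Rightarrow> nat \<times> nat" where
  "pos xs = (cT xs, cF xs)"

definition padd :: "nat \<times> nat \<Rightarrow> nat \<times> nat \<Rightarrow> nat \<times> nat" where
  "padd p q = (fst p + fst q, snd p + snd q)"

lemma cT_cF: "cT xs + cF xs = length xs"
  unfolding cT_def cF_def using sum_length_filter_compl[of "\<lambda>x. x" xs] by simp

lemma pos_append: "pos (xs @ ys) = padd (pos xs) (pos ys)"
  by (simp add: pos_def padd_def cF_def)

lemma padd_assoc: "padd (padd p q) r = padd p (padd q r)"
  by (simp add: padd_def)

lemma walk_pos_stake: "walk_pos \<omega> i = pos (stake i \<omega>)"
proof -
  have "card {j. j < i \<and> \<omega> !! j} = cT (stake i \<omega>)"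
    unfolding cT_def length_filter_conv_card by (rule arg_cong[where f = card]) auto
  moreover have "card {j. j < i \<and> \<not> \<omega> !! j} = cF (stake i \<omega>)"
    unfolding cF_def length_filter_conv_card by (rule arg_cong[where f = card]) auto
  ultimately show ?thesis by (simp add: walk_pos_def pos_def)
qed

definition V :: "nat \<Rightarrow> nat \<times> nat \<Rightarrow> real" where
  "V m q = (if visible m q then 1 else 0)"

definition yv :: "nat \<Rightarrow> nat \<Rightarrow> nat \<Rightarrow> bool list \<Rightarrow> real" where
  "yv k m i xs = (\<Prod>l<k. V m (pos (take (i + l) xs)))"

lemma V_bounds: "0 \<le> V m q" "V m q \<le> 1"
  by (simp_all add: V_def)

lemma prod_V_bounds: "0 \<le> (\<Prod>l\<in>A. V m (g l))" "(\<Prod>l\<in>A. V m (g l)) \<le> 1"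
  by (simp_all add: V_bounds prod_nonneg prod_le_1)

lemma yv_bounds: "0 \<le> yv k m i xs" "yv k m i xs \<le> 1"
  unfolding yv_def by (rule prod_V_bounds)+

lemma Yv_stake: "i + k \<le> N \<Longrightarrow> Yv k m i \<omega> = yv k m i (stake N \<omega>)"
  unfolding Yv_def yv_def Xv_def V_def
  by (rule prod.cong) (auto simp: take_stake walk_pos_stake min_def)

lemma D_pos: "0 < D m"
  unfolding D_def by (rule prod_pos) (auto simp: prime_gt_0_nat)

lemma vis_mod: "visible m (a, b) = visible m (a mod D m, b mod D m)"
proof -
  have fin: "finite {p::nat. prime p \<and> p < m}" by simp
  have "p dvd D m" if "prime p" "p < m" for p
    unfolding D_def using fin that by (intro dvd_prodI[where f = "\<lambda>p. p"]) auto
  then show ?thesis unfolding visible_def by (auto simp: dvd_mod_iff)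
qed

lemma V_cong:
  assumes "fst q mod D m = fst q' mod D m" "snd q mod D m = snd q' mod D m"
  shows "V m (padd q r) = V m (padd q' r)"
proof -
  have "(fst q + fst r) mod D m = (fst q' + fst r) mod D m"
    using assms(1) by (metis mod_add_left_eq)
  moreover have "(snd q + snd r) mod D m = (snd q' + snd r) mod D m"
    using assms(2) by (metis mod_add_left_eq)
  ultimately show ?thesis unfolding V_def padd_def
    by (metis vis_mod prod.collapse)
qed

definition G :: "real \<Rightarrow> nat \<Rightarrow> nat \<Rightarrow> nat \<times> nat \<Rightarrow> real" where
  "G a k m q = EL a k (\<lambda>ds. \<Prod>l<k. V m (padd q (pos (take l ds))))"

lemma G_cong:
  assumes "fst q mod D m = fst q' mod D m" "snd q mod D m = snd q' mod D m"
  shows "G a k m q = G a k m q'"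
  unfolding G_def using V_cong[OF assms] by simp

lemma G_bounds: assumes "0 \<le> a" "a \<le> 1" shows "0 \<le> G a k m q \<and> G a k m q \<le> 1"
  unfolding G_def by (rule EL_bounds[OF assms]) (simp add: prod_V_bounds)

definition hf :: "real \<Rightarrow> nat \<Rightarrow> nat \<Rightarrow> nat \<Rightarrow> nat \<Rightarrow> real" where
  "hf a k m j x = G a k m (x, j + (D m - 1) * x)"

lemma per_hf: "per (D m) (hf a k m j)"
  unfolding per_def hf_def
proof
  fix x
  obtain d where d: "D m = Suc d" using D_pos[of m] gr0_implies_Suc by blast
  have "(j + (D m - 1) * (x + D m)) mod D m = (j + (D m - 1) * x + D m * (D m - 1)) mod D m"
    by (simp add: d algebra_simps)
  also have "\<dots> = (j + (D m - 1) * x) mod D m" by (rule mod_mult_self2)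
  finally show "G a k m (x + D m, j + (D m - 1) * (x + D m)) = G a k m (x, j + (D m - 1) * x)"
    by (intro G_cong) simp_all
qed

lemma hf_eq:
  assumes "x + y = j"
  shows "G a k m (x, y) = hf a k m j x"
  unfolding hf_def
proof (rule G_cong)
  have "j + (D m - 1) * x = y + D m * x" using assms D_pos[of m]
    by (simp add: algebra_simps diff_mult_distrib2)
  then show "snd (x, y) mod D m = snd (x, j + (D m - 1) * x) mod D m" by simp
qed simp

lemma take_split: "length cs = t \<Longrightarrow> take (t + l) (cs @ ds) = cs @ take l ds"
  by simp

lemma key:
  assumes a: "0 \<le> a" "a \<le> 1" and uj: "u \<le> j" and jN: "j + k \<le> N"
    and pre: "\<And>as bs. length as = u \<Longrightarrow> f (as @ bs) = f as"
  shows "EL a N (\<lambda>xs. f xs * yv k m j xs) = EL a u (\<lambda>as. f as * (Pop a ^^ (j - u)) (hf a k m j) (cT as))"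
proof -
  define t where "t = j - u"
  have N1: "N = u + (N - u)" and N2: "N - u = t + (N - j)" using uj jN by (auto simp: t_def)
  have "EL a N (\<lambda>xs. f xs * yv k m j xs) = EL a u (\<lambda>as. EL a (N - u) (\<lambda>bs. f (as @ bs) * yv k m j (as @ bs)))"
    by (subst N1) (rule EL_append)
  also have "\<dots> = EL a u (\<lambda>as. f as * (Pop a ^^ t) (hf a k m j) (cT as))"
  proof (rule EL_cong)
    fix as :: "bool list" assume las: "length as = u"
    have yv_as: "yv k m j (as @ bs) = (\<Prod>l<k. V m (padd (pos as) (pos (take (t + l) bs))))" for bs
      unfolding yv_def
    proof (rule prod.cong)
      fix l assume "l \<in> {..<k}"
      have "take (j + l) (as @ bs) = as @ take (t + l) bs"
        using las uj by (simp add: t_def)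
      then show "V m (pos (take (j + l) (as @ bs))) = V m (padd (pos as) (pos (take (t + l) bs)))"
        by (simp add: pos_append)
    qed simp
    have inner: "EL a (N - u) (\<lambda>bs. \<Prod>l<k. V m (padd (pos as) (pos (take (t + l) bs))))
        = (Pop a ^^ t) (hf a k m j) (cT as)"
    proof -
      have "EL a (N - u) (\<lambda>bs. \<Prod>l<k. V m (padd (pos as) (pos (take (t + l) bs))))
          = EL a t (\<lambda>cs. EL a (N - j) (\<lambda>ds. \<Prod>l<k. V m (padd (pos as) (pos (take (t + l) (cs @ ds))))))"
        by (subst N2) (rule EL_append)
      also have "\<dots> = EL a t (\<lambda>cs. G a k m (padd (pos as) (pos cs)))"
      proof (rule EL_cong)
        fix cs :: "bool list" assume lcs: "length cs = t"
        have "EL a (N - j) (\<lambda>ds. \<Prod>l<k. V m (padd (pos as) (pos (take (t + l) (cs @ ds)))))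
            = EL a (N - j) (\<lambda>ds. \<Prod>l<k. V m (padd (padd (pos as) (pos cs)) (pos (take l ds))))"
          using lcs by (simp add: pos_append padd_assoc)
        also have "\<dots> = G a k m (padd (pos as) (pos cs))"
          unfolding G_def
        proof (rule EL_prefix)
          show "k \<le> N - j" using jN by simp
          fix xs ys :: "bool list" assume "length xs = k"
          then show "(\<Prod>l<k. V m (padd (padd (pos as) (pos cs)) (pos (take l (xs @ ys)))))
              = (\<Prod>l<k. V m (padd (padd (pos as) (pos cs)) (pos (take l xs))))"
            by (intro prod.cong) auto
        qed
        finally show "EL a (N - j) (\<lambda>ds. \<Prod>l<k. V m (padd (pos as) (pos (take (t + l) (cs @ ds)))))
            = G a k m (padd (pos as) (pos cs))" .
      qed
      also have "\<dots> = EL a t (\<lambda>cs. hf a k m j (cT as + cT cs))"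
      proof (rule EL_cong)
        fix cs :: "bool list" assume lcs: "length cs = t"
        have "(cT as + cT cs) + (cF as + cF cs) = j"
          using cT_cF[of as] cT_cF[of cs] las lcs uj by (simp add: t_def)
        then show "G a k m (padd (pos as) (pos cs)) = hf a k m j (cT as + cT cs)"
          unfolding padd_def pos_def by (simp add: hf_eq)
      qed
      also have "\<dots> = (Pop a ^^ t) (hf a k m j) (cT as)" by (rule EL_count)
      finally show ?thesis .
    qed
    show "EL a (N - u) (\<lambda>bs. f (as @ bs) * yv k m j (as @ bs)) = f as * (Pop a ^^ t) (hf a k m j) (cT as)"
      using inner by (simp add: pre[OF las] yv_as EL_cmult)
  qed
  finally show ?thesis by (simp add: t_def)
qed

lemma cov_le:
  assumes a: "0 \<le> a" "a \<le> 1" and f: "\<And>xs. length xs = u \<Longrightarrow> 0 \<le> f xs \<and> f xs \<le> 1"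
    and W: "\<And>xs ys. length xs = u \<Longrightarrow> length ys = u \<Longrightarrow> W xs - W ys \<le> T" and T: "0 \<le> T"
  shows "EL a u (\<lambda>xs. f xs * W xs) - EL a u f * EL a u W \<le> T"
proof -
  have "EL a u (\<lambda>xs. f xs * W xs) - EL a u f * EL a u W = EL a u (\<lambda>xs. f xs * (W xs - EL a u W))"
    by (simp add: right_diff_distrib EL_diff EL_cmult[of a u "EL a u W" f, symmetric] mult.commute)
  also have "\<dots> \<le> EL a u (\<lambda>_. T)"
  proof (rule EL_mono[OF a])
    fix xs :: "bool list" assume lx: "length xs = u"
    have "W xs - EL a u W = EL a u (\<lambda>ys. W xs - W ys)" by (simp add: EL_diff)
    also have "\<dots> \<le> EL a u (\<lambda>_. T)" by (rule EL_mono[OF a]) (rule W[OF lx])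
    also have "\<dots> = T" by simp
    finally have le: "W xs - EL a u W \<le> T" .
    show "f xs * (W xs - EL a u W) \<le> T"
    proof (cases "0 \<le> W xs - EL a u W")
      case True
      then have "f xs * (W xs - EL a u W) \<le> 1 * (W xs - EL a u W)"
        using f[OF lx] by (intro mult_right_mono) auto
      then show ?thesis using le by simp
    next
      case False
      then have "f xs * (W xs - EL a u W) \<le> 0"
        using f[OF lx] by (simp add: mult_nonneg_nonpos)
      then show ?thesis using T by simp
    qed
  qed
  finally show ?thesis by simp
qed

section \<open>Covariance estimates\<close>

lemma Tosc_nonneg: "0 \<le> Tosc a L \<phi> t"
  unfolding Tosc_def by (simp add: sum_nonneg)

lemma yv_prefix: "i + k \<le> u \<Longrightarrow> length as = u \<Longrightarrow> yv k m i (as @ bs) = yv k m i as"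
  unfolding yv_def by (intro prod.cong) auto

lemma cov_far:
  assumes a: "0 < a" "a < 1" and ij: "i + k \<le> j" and jN: "j + k \<le> N"
  shows "EL a N (\<lambda>xs. yv k m i xs * yv k m j xs) - EL a N (yv k m i) * EL a N (yv k m j)
      \<le> Tosc a (D m) (hf a k m j) (j - (i + k))"
proof -
  have a': "0 \<le> a" "a \<le> 1" using a by auto
  define u where "u = i + k"
  define W where "W = (\<lambda>as. (Pop a ^^ (j - u)) (hf a k m j) (cT as))"
  have uj: "u \<le> j" using ij by (simp add: u_def)
  have E1: "EL a N (\<lambda>xs. yv k m i xs * yv k m j xs) = EL a u (\<lambda>as. yv k m i as * W as)"
    unfolding W_def by (rule key[OF a' uj jN]) (rule yv_prefix[of i k u], simp add: u_def, simp)
  have E2: "EL a N (yv k m j) = EL a u W"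
    using key[OF a' uj jN, of "\<lambda>_. 1"] by (simp add: W_def)
  have E3: "EL a N (yv k m i) = EL a u (yv k m i)"
  proof (rule EL_prefix)
    show "u \<le> N" using uj jN by simp
    show "yv k m i (xs @ ys) = yv k m i xs" if "length xs = u" for xs ys
      using yv_prefix[of i k u xs m ys] that by (simp add: u_def)
  qed
  have "EL a u (\<lambda>as. yv k m i as * W as) - EL a u (yv k m i) * EL a u W
      \<le> Tosc a (D m) (hf a k m j) (j - u)"
  proof (rule cov_le[OF a'])
    show "0 \<le> yv k m i xs \<and> yv k m i xs \<le> 1" for xs by (simp add: yv_bounds)
    show "W xs - W ys \<le> Tosc a (D m) (hf a k m j) (j - u)" for xs ys
      unfolding W_def Tosc_def
      by (rule osc_all[OF per_iter[OF per_hf] D_pos])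
  qed (rule Tosc_nonneg)
  then show ?thesis using E1 E2 E3 by (simp add: u_def)
qed

lemma cov_one:
  assumes a: "0 \<le> a" "a \<le> 1"
  shows "EL a N (\<lambda>xs. yv k m i xs * yv k m j xs) - EL a N (yv k m i) * EL a N (yv k m j) \<le> 1"
proof -
  have "EL a N (\<lambda>xs. yv k m i xs * yv k m j xs) \<le> 1"
    using EL_bounds[OF a, of N 0 "\<lambda>xs. yv k m i xs * yv k m j xs" 1]
    by (simp add: yv_bounds mult_le_one)
  moreover have "0 \<le> EL a N (yv k m i)" "0 \<le> EL a N (yv k m j)"
    using EL_bounds[OF a, of N 0 "yv k m i" 1] EL_bounds[OF a, of N 0 "yv k m j" 1]
    by (simp_all add: yv_bounds)
  ultimately show ?thesis using mult_nonneg_nonneg[of "EL a N (yv k m i)" "EL a N (yv k m j)"] by linarith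
qed

lemma inner_T:
  fixes T :: "nat \<Rightarrow> real"
  assumes "j \<le> n" "\<And>t. 0 \<le> T t"
  shows "(\<Sum>i\<in>{1..n}. if i + k \<le> j then T (j - (i + k)) else 0) \<le> (\<Sum>t<n. T t)"
proof -
  define S where "S = {i\<in>{1..n}. i + k \<le> j}"
  have "(\<Sum>i\<in>{1..n}. if i + k \<le> j then T (j - (i + k)) else 0) = (\<Sum>i\<in>S. T (j - (i + k)))"
    unfolding S_def by (rule sum.inter_filter[symmetric]) simp
  also have "\<dots> = (\<Sum>t\<in>(\<lambda>i. j - (i + k)) ` S. T t)"
    by (rule sum.reindex[symmetric, unfolded comp_def]) (auto simp: inj_on_def S_def)
  also have "\<dots> \<le> (\<Sum>t<n. T t)"
    by (rule sum_mono2) (use assms in \<open>auto simp: S_def\<close>)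
  finally show ?thesis .
qed

lemma count_near: "(\<Sum>j\<in>{1..n}. if i < j + k \<and> j < i + k then (1::real) else 0) \<le> 2 * real k"
proof -
  have "(\<Sum>j\<in>{1..n}. if i < j + k \<and> j < i + k then (1::real) else 0)
      = (\<Sum>j\<in>{j\<in>{1..n}. i < j + k \<and> j < i + k}. 1)"
    by (rule sum.inter_filter[symmetric]) simp
  also have "\<dots> = real (card {j\<in>{1..n}. i < j + k \<and> j < i + k})" by simp
  also have "card {j\<in>{1..n}. i < j + k \<and> j < i + k} \<le> card {i - k..<i + k}"
    by (rule card_mono) auto
  also have "card {i - k..<i + k} \<le> 2 * k" by simp
  finally show ?thesis by simp
qed

section \<open>Variance in list form\<close>

definition sbl :: "nat \<Rightarrow> nat \<Rightarrow> nat \<Rightarrow> bool list \<Rightarrow> real" where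
  "sbl n k m xs = (1 / real n) * (\<Sum>i=1..n. yv k m i xs)"

lemma Sbar_stake: "Sbar n k m = (\<lambda>\<omega>. sbl n k m (stake (n + k) \<omega>))"
proof
  fix \<omega>
  show "Sbar n k m \<omega> = sbl n k m (stake (n + k) \<omega>)"
    unfolding Sbar_def sbl_def by (intro arg_cong[where f = "\<lambda>x. _ * x"] sum.cong) (auto intro: Yv_stake)
qed

lemma EL_var: "EL a N (\<lambda>xs. (f xs - EL a N f)\<^sup>2) = EL a N (\<lambda>xs. (f xs)\<^sup>2) - (EL a N f)\<^sup>2"
proof -
  define c where "c = EL a N f"
  have "(\<lambda>xs. (f xs - c)\<^sup>2) = (\<lambda>xs. ((f xs)\<^sup>2 - (2 * c) * f xs) + c\<^sup>2)"
    by (rule ext) (simp add: power2_eq_square algebra_simps)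
  then have "EL a N (\<lambda>xs. (f xs - c)\<^sup>2) = EL a N (\<lambda>xs. (f xs)\<^sup>2) - (2 * c) * c + c\<^sup>2"
    by (simp add: EL_add EL_diff EL_cmult c_def)
  then show ?thesis by (simp add: c_def power2_eq_square)
qed

lemma var_EL:
  assumes a: "0 \<le> a" "a \<le> 1"
  shows "var (walk_space a) (Sbar n k m)
      = EL a (n + k) (\<lambda>xs. (sbl n k m xs)\<^sup>2) - (EL a (n + k) (sbl n k m))\<^sup>2"
proof -
  have "var (walk_space a) (Sbar n k m)
      = (\<integral>x. (sbl n k m (stake (n + k) x) - EL a (n + k) (sbl n k m))\<^sup>2 \<partial>walk_space a)"
    unfolding var_def Sbar_stake walk_space_def integral_stake[OF a] ..
  also have "\<dots> = EL a (n + k) (\<lambda>xs. (sbl n k m xs - EL a (n + k) (sbl n k m))\<^sup>2)"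
    unfolding walk_space_def by (rule integral_stake[OF a])
  finally show ?thesis by (simp add: EL_var)
qed

lemma var_cov:
  "EL a N (\<lambda>xs. (sbl n k m xs)\<^sup>2) - (EL a N (sbl n k m))\<^sup>2
   = (1 / real n)\<^sup>2 * (\<Sum>i\<in>{1..n}. \<Sum>j\<in>{1..n}.
        EL a N (\<lambda>xs. yv k m i xs * yv k m j xs) - EL a N (yv k m i) * EL a N (yv k m j))"
proof -
  have sq: "(sbl n k m xs)\<^sup>2 = (1 / real n)\<^sup>2 * (\<Sum>i\<in>{1..n}. \<Sum>j\<in>{1..n}. yv k m i xs * yv k m j xs)" for xs
  proof -
    have "(sbl n k m xs)\<^sup>2 = (1 / real n)\<^sup>2 * ((\<Sum>i\<in>{1..n}. yv k m i xs) * (\<Sum>j\<in>{1..n}. yv k m j xs))"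
      by (simp add: sbl_def power_mult_distrib power2_eq_square)
    then show ?thesis by (simp only: sum_product)
  qed
  have e1: "EL a N (\<lambda>xs. (sbl n k m xs)\<^sup>2) = (1 / real n)\<^sup>2 * (\<Sum>i\<in>{1..n}. \<Sum>j\<in>{1..n}. EL a N (\<lambda>xs. yv k m i xs * yv k m j xs))"
    unfolding sq EL_cmult EL_sum ..
  have e2: "EL a N (sbl n k m) = (1 / real n) * (\<Sum>i\<in>{1..n}. EL a N (yv k m i))"
    unfolding sbl_def EL_cmult EL_sum ..
  have e3: "(EL a N (sbl n k m))\<^sup>2 = (1 / real n)\<^sup>2 * (\<Sum>i\<in>{1..n}. \<Sum>j\<in>{1..n}. EL a N (yv k m i) * EL a N (yv k m j))"
  proof -
    have "(EL a N (sbl n k m))\<^sup>2 = (1 / real n)\<^sup>2 * ((\<Sum>i\<in>{1..n}. EL a N (yv k m i)) * (\<Sum>j\<in>{1..n}. EL a N (yv k m j)))"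
      unfolding e2 by (simp add: power_mult_distrib power2_eq_square)
    then show ?thesis by (simp only: sum_product)
  qed
  show ?thesis unfolding e1 e3 by (simp add: sum_subtractf right_diff_distrib)
qed

theorem proposition5:
  fixes \<alpha> :: real and k :: nat
  assumes "0 < \<alpha>" and "\<alpha> < 1" and "1 \<le> k"
  shows "\<exists>C>0. \<forall>m n. 1 \<le> m \<longrightarrow> 1 \<le> n \<longrightarrow>
           var (walk_space \<alpha>) (Sbar n k m) \<le> C * real (D m) ^ 4 / sqrt (real n)"
proof -
  have a: "0 < \<alpha>" "\<alpha> < 1" using assms by auto
  have a': "0 \<le> \<alpha>" "\<alpha> \<le> 1" using assms by auto
  define c where "c = \<alpha> * (1 - \<alpha>)"
  have c: "0 < c" using a by (simp add: c_def)
  define C where "C = 1 / c + 1 + 2 * real k"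
  have C: "0 < C" using c by (simp add: C_def add_pos_nonneg)
  show ?thesis
  proof (intro exI[of _ C] conjI allI impI C)
    fix m n :: nat assume m: "1 \<le> m" and n: "1 \<le> n"
    define cov where "cov i j = EL \<alpha> (n + k) (\<lambda>xs. yv k m i xs * yv k m j xs)
       - EL \<alpha> (n + k) (yv k m i) * EL \<alpha> (n + k) (yv k m j)" for i j
    define TT where "TT j t = Tosc \<alpha> (D m) (hf \<alpha> k m j) t" for j t
    define Dr where "Dr = real (D m)"
    have Dr: "1 \<le> Dr" using D_pos[of m] by (simp add: Dr_def)
    define Db where "Db = Dr * sqrt (real n) * (1 / c + 1) / 2"
    have TTnn: "0 \<le> TT j t" for j t by (simp add: TT_def Tosc_nonneg)
    have TTsum: "(\<Sum>t<n. TT j t) \<le> Db" for j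
      unfolding TT_def Db_def Dr_def c_def
      by (rule sum_Tosc[OF a per_hf _ D_pos n]) (simp add: hf_def G_bounds[OF a'])
    define B where "B i j = (if i + k \<le> j then TT j (j - (i + k)) else 0)
        + (if j + k \<le> i then TT i (i - (j + k)) else 0)
        + (if i < j + k \<and> j < i + k then 1 else 0)" for i j
    have covB: "cov i j \<le> B i j" if "i \<in> {1..n}" "j \<in> {1..n}" for i j
    proof -
      have nn: "0 \<le> (if i + k \<le> j then TT j (j - (i + k)) else 0)"
           "0 \<le> (if j + k \<le> i then TT i (i - (j + k)) else 0)"
           "0 \<le> (if i < j + k \<and> j < i + k then 1 else (0::real))"
        using TTnn by auto
      consider "i + k \<le> j" | "j + k \<le> i" | "i < j + k \<and> j < i + k" by linarith
      then show ?thesis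
      proof cases
        case 1
        have "cov i j \<le> TT j (j - (i + k))"
          unfolding cov_def TT_def by (rule cov_far[OF a 1]) (use that in simp)
        then show ?thesis using nn 1 by (simp add: B_def)
      next
        case 2
        have "cov j i \<le> TT i (i - (j + k))"
          unfolding cov_def TT_def by (rule cov_far[OF a 2]) (use that in simp)
        moreover have "cov i j = cov j i" by (simp add: cov_def mult.commute)
        ultimately show ?thesis using nn 2 by (simp add: B_def)
      next
        case 3
        have "cov i j \<le> 1" unfolding cov_def by (rule cov_one[OF a'])
        then show ?thesis using nn 3 by (simp add: B_def)
      qed
    qed
    have S1: "(\<Sum>i\<in>{1..n}. \<Sum>j\<in>{1..n}. if i + k \<le> j then TT j (j - (i + k)) else 0) \<le> real n * Db"
    proof -
      have "(\<Sum>i\<in>{1..n}. \<Sum>j\<in>{1..n}. if i + k \<le> j then TT j (j - (i + k)) else 0)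
          = (\<Sum>j\<in>{1..n}. \<Sum>i\<in>{1..n}. if i + k \<le> j then TT j (j - (i + k)) else 0)"
        by (rule sum.swap)
      also have "\<dots> \<le> (\<Sum>j\<in>{1..n}. Db)"
      proof (rule sum_mono)
        fix j assume "j \<in> {1..n}"
        then have "(\<Sum>i\<in>{1..n}. if i + k \<le> j then TT j (j - (i + k)) else 0) \<le> (\<Sum>t<n. TT j t)"
          by (intro inner_T) (auto intro: TTnn)
        then show "(\<Sum>i\<in>{1..n}. if i + k \<le> j then TT j (j - (i + k)) else 0) \<le> Db"
          using TTsum[of j] by linarith
      qed
      finally show ?thesis by simp
    qed
    have S2: "(\<Sum>i\<in>{1..n}. \<Sum>j\<in>{1..n}. if j + k \<le> i then TT i (i - (j + k)) else 0) \<le> real n * Db"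
    proof -
      have "(\<Sum>i\<in>{1..n}. \<Sum>j\<in>{1..n}. if j + k \<le> i then TT i (i - (j + k)) else 0) \<le> (\<Sum>i\<in>{1..n}. Db)"
      proof (rule sum_mono)
        fix i assume "i \<in> {1..n}"
        then have "(\<Sum>j\<in>{1..n}. if j + k \<le> i then TT i (i - (j + k)) else 0) \<le> (\<Sum>t<n. TT i t)"
          by (intro inner_T) (auto intro: TTnn)
        then show "(\<Sum>j\<in>{1..n}. if j + k \<le> i then TT i (i - (j + k)) else 0) \<le> Db"
          using TTsum[of i] by linarith
      qed
      then show ?thesis by simp
    qed
    have S3: "(\<Sum>i\<in>{1..n}. \<Sum>j\<in>{1..n}. if i < j + k \<and> j < i + k then 1 else (0::real)) \<le> real n * (2 * real k)"
    proof -
      have "(\<Sum>i\<in>{1..n}. \<Sum>j\<in>{1..n}. if i < j + k \<and> j < i + k then 1 else (0::real)) \<le> (\<Sum>i\<in>{1..n}. 2 * real k)"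
        by (rule sum_mono) (rule count_near)
      then show ?thesis by simp
    qed
    have sumcov: "(\<Sum>i\<in>{1..n}. \<Sum>j\<in>{1..n}. cov i j) \<le> real n * Db + real n * Db + real n * (2 * real k)"
    proof -
      have "(\<Sum>i\<in>{1..n}. \<Sum>j\<in>{1..n}. cov i j) \<le> (\<Sum>i\<in>{1..n}. \<Sum>j\<in>{1..n}. B i j)"
        by (intro sum_mono covB) auto
      also have "(\<Sum>i\<in>{1..n}. \<Sum>j\<in>{1..n}. B i j)
          = (\<Sum>i\<in>{1..n}. \<Sum>j\<in>{1..n}. if i + k \<le> j then TT j (j - (i + k)) else 0)
          + (\<Sum>i\<in>{1..n}. \<Sum>j\<in>{1..n}. if j + k \<le> i then TT i (i - (j + k)) else 0)
          + (\<Sum>i\<in>{1..n}. \<Sum>j\<in>{1..n}. if i < j + k \<and> j < i + k then 1 else (0::real))"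
        unfolding B_def by (simp add: sum.distrib)
      finally show ?thesis using S1 S2 S3 by linarith
    qed
    have nr: "1 \<le> real n" using n by simp
    define sn where "sn = sqrt (real n)"
    have sn: "1 \<le> sn" using nr by (simp add: sn_def)
    have nsn: "real n = sn * sn" using nr by (simp add: sn_def)
    have "var (walk_space \<alpha>) (Sbar n k m) = (1 / real n)\<^sup>2 * (\<Sum>i\<in>{1..n}. \<Sum>j\<in>{1..n}. cov i j)"
      unfolding var_EL[OF a'] var_cov cov_def ..
    also have "\<dots> \<le> (1 / real n)\<^sup>2 * (real n * Db + real n * Db + real n * (2 * real k))"
      by (rule mult_left_mono[OF sumcov]) simp
    also have "\<dots> = (Dr * (1 / c + 1) * sn + 2 * real k) / (sn * sn)"
      using nr sn by (simp add: Db_def nsn sn_def[symmetric] field_simps power2_eq_square)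
    also have "\<dots> \<le> C * Dr ^ 4 / sn"
    proof -
      have D4: "Dr \<le> Dr ^ 4" "1 \<le> Dr ^ 4" using Dr by (simp_all add: power_increasing[of 1 4 Dr, simplified] one_le_power)
      have c1: "0 \<le> 1 / c + 1" using c by simp
      have "Dr * (1 / c + 1) * sn \<le> Dr ^ 4 * (1 / c + 1) * sn"
        using D4 c1 sn by (intro mult_right_mono) auto
      moreover have "2 * real k \<le> 2 * real k * (Dr ^ 4 * sn)"
      proof -
        have "1 * 1 \<le> Dr ^ 4 * sn" using D4 sn by (intro mult_mono) auto
        then have "2 * real k * 1 \<le> 2 * real k * (Dr ^ 4 * sn)" by (intro mult_left_mono) auto
        then show ?thesis by simp
      qed
      ultimately have "Dr * (1 / c + 1) * sn + 2 * real k \<le> C * Dr ^ 4 * sn"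
        by (simp add: C_def algebra_simps)
      then have "(Dr * (1 / c + 1) * sn + 2 * real k) / (sn * sn) \<le> (C * Dr ^ 4 * sn) / (sn * sn)"
        using sn by (intro divide_right_mono) auto
      also have "(C * Dr ^ 4 * sn) / (sn * sn) = C * Dr ^ 4 / sn" using sn by simp
      finally show ?thesis .
    qed
    finally show "var (walk_space \<alpha>) (Sbar n k m) \<le> C * real (D m) ^ 4 / sqrt (real n)"
      by (simp add: Dr_def sn_def)
  qed
qed

end
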